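(* In $\lambda_{\mathrm{act}}$: if $\Gamma ; \Delta \vdash \mathcal{C}$ and $\mathcal{C} \equiv \mathcal{D}$ for some configuration $\mathcal{D}$, then $\Gamma ; \Delta \vdash \mathcal{D}$.
   Context: The calculus $\lambda_{\mathrm{act}}$. Types $A,B,C ::= \mathbf{1} \mid A \xrightarrow{C} B \mid \mathsf{ActorRef}(A)$; values $V,W ::= \alpha \mid \lambda x.M \mid ()$ ($\alpha$ a variable or name); computations $M,N ::= V\,W \mid \mathbf{let}\ x \Leftarrow M\ \mathbf{in}\ N \mid \mathbf{return}\ V \mid \mathbf{spawn}\ M \mid \mathbf{send}\ V\ W \mid \mathbf{receive} \mid \mathbf{self}$. Value typing $\Gamma\vdash V:A$ ($\alpha$ looked up in $\Gamma$; $\lambda x.M : A\xrightarrow{C}B$ if $\Gamma,x:A\mid C\vdash M:B$; $():\mathbf 1$) and computation typing $\Gamma\mid C\vdash M:A$ with mailbox type $C$ ($V\,W:B$ if $V:A\xrightarrow{C}B$, $W:A$; $\mathbf{let}$ with both parts under mailbox $C$; $\mathbf{return}\ V:A$ if $V:A$; $\mathbf{send}\ V\ W:\mathbf 1$ if $V:A$, $W:\mathsf{ActorRef}(A)$; $\Gamma\mid A\vdash\mathbf{receive}:A$; $\Gamma\mid C\vdash \mathbf{spawn}\ M:\mathsf{ActorRef}(A)$ if $\Gamma\mid A\vdash M:\mathbf 1$; $\Gamma\mid A\vdash\mathbf{self}:\mathsf{ActorRef}(A)$). Configurations $\mathcal{C},\mathcal{D},\mathcal{E} ::= \mathcal{C}\parallel\mathcal{D}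 \mid (\nu a)\mathcal{C} \mid \langle a, M, \vec V\rangle$, where $\langle a, M, \vec V\rangle$ is an actor named $a$ evaluating $M$ with mailbox $\vec V = V_1\cdot\ldots\cdot V_n$. Configuration contexts $G ::= [\,]\mid G\parallel\mathcal{C}\mid(\nu a)G$. Configuration typing $\Gamma;\Delta\vdash\mathcal{C}$ ($\Delta$ linear, names to types): (Par) $\Gamma;\Delta_1\vdash\mathcal{C}_1$ and $\Gamma;\Delta_2\vdash\mathcal{C}_2$ give $\Gamma;\Delta_1,\Delta_2\vdash\mathcal{C}_1\parallel\mathcal{C}_2$ (disjoint); (Pid) $\Gamma,a:\mathsf{ActorRef}(A);\Delta,a:A\vdash\mathcal{C}$ gives $\Gamma;\Delta\vdash(\nu a)\mathcal{C}$; (Actor) if $\Gamma,a:\mathsf{ActorRef}(A)\mid A\vdash M:\mathbf 1$ and $\Gamma,a:\mathsf{ActorRef}(A)\vdash V_i:A$ for all $i$, then $\Gamma,a:\mathsf{ActorRef}(A);a:A\vdash\langle a,M,\vec V\rangle$. Structural congruence $\equiv$: the least congruence closed under $G[-]$ with $\mathcal{C}\parallel\mathcal{D}\equiv\mathcal{D}\parallel\mathcal{C}$, $\mathcal{C}\parallel(\mathcal{D}\parallel\mathcal{E})\equiv(\mathcal{C}\parallel\mathcal{D})\parallel\mathcal{E}$, and $\mathcal{C}\parallel(\nu a)\mathcal{D}\equiv(\nu a)(\mathcal{C}\parallel\mathcal{D})$ if $a\notin\mathsf{fv}(\mathcal{C})$. *)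

theory Defs
  imports Main
begin

text \<open>The actor calculus lambda_act. Variables and actor names share one
  syntactic category of identifiers (alpha ::= variable | name).\<close>

type_synonym ident = string

datatype ty =
    TUnit
  | TFun ty ty ty          (* TFun A C B  =  A -C-> B *)
  | TActorRef ty

datatype val =
    VId ident
  | VLam ident comp
  | VUnit
and comp =
    CApp val val
  | CLet ident comp comp
  | CReturn val
  | CSpawn comp
  | CSend val val
  | CReceive
  | CSelf

datatype config =
    Par config config
  | Nu ident config
  | Actor ident comp "val list"

primrec fv_val :: "val \<Rightarrow> ident set" and fv_comp :: "comp \<Rightarrow> ident set" where
  "fv_val (VId a) = {a}"
| "fv_val (VLam x M) = fv_comp M - {x}"
| "fv_val VUnit = {}"
| "fv_comp (CApp V W) = fv_val V \<union> fv_val W"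
| "fv_comp (CLet x M N) = fv_comp M \<union> (fv_comp N - {x})"
| "fv_comp (CReturn V) = fv_val V"
| "fv_comp (CSpawn M) = fv_comp M"
| "fv_comp (CSend V W) = fv_val V \<union> fv_val W"
| "fv_comp CReceive = {}"
| "fv_comp CSelf = {}"

primrec fv_config :: "config \<Rightarrow> ident set" where
  "fv_config (Par C D) = fv_config C \<union> fv_config D"
| "fv_config (Nu a C) = fv_config C - {a}"
| "fv_config (Actor a M Vs) = {a} \<union> fv_comp M \<union> (\<Union>V\<in>set Vs. fv_val V)"

type_synonym tenv = "ident \<Rightarrow> ty option"

text \<open>Value typing  \<Gamma> \<turnstile> V : A  and computation typing  \<Gamma> | C \<turnstile> M : A
  (here: comp_ty \<Gamma> C M A, with C the mailbox type).  \<Gamma>, x:A is map update.\<close>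
inductive val_ty :: "tenv \<Rightarrow> val \<Rightarrow> ty \<Rightarrow> bool"
  and comp_ty :: "tenv \<Rightarrow> ty \<Rightarrow> comp \<Rightarrow> ty \<Rightarrow> bool" where
  T_Id: "\<Gamma> a = Some A \<Longrightarrow> val_ty \<Gamma> (VId a) A"
| T_Lam: "comp_ty (\<Gamma>(x \<mapsto> A)) C M B \<Longrightarrow> val_ty \<Gamma> (VLam x M) (TFun A C B)"
| T_Unit: "val_ty \<Gamma> VUnit TUnit"
| T_App: "val_ty \<Gamma> V (TFun A C B) \<Longrightarrow> val_ty \<Gamma> W A \<Longrightarrow> comp_ty \<Gamma> C (CApp V W) B"
| T_Let: "comp_ty \<Gamma> C M A \<Longrightarrow> comp_ty (\<Gamma>(x \<mapsto> A)) C N B \<Longrightarrow> comp_ty \<Gamma> C (CLet x M N) B"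
| T_Return: "val_ty \<Gamma> V A \<Longrightarrow> comp_ty \<Gamma> C (CReturn V) A"
| T_Send: "val_ty \<Gamma> V A \<Longrightarrow> val_ty \<Gamma> W (TActorRef A) \<Longrightarrow> comp_ty \<Gamma> C (CSend V W) TUnit"
| T_Receive: "comp_ty \<Gamma> A CReceive A"
| T_Spawn: "comp_ty \<Gamma> A M TUnit \<Longrightarrow> comp_ty \<Gamma> C (CSpawn M) (TActorRef A)"
| T_Self: "comp_ty \<Gamma> A CSelf (TActorRef A)"

inductive config_ty :: "tenv \<Rightarrow> (ident \<Rightarrow> ty option) \<Rightarrow> config \<Rightarrow> bool" where
  T_Par: "config_ty \<Gamma> \<Delta>1 C1 \<Longrightarrow> config_ty \<Gamma> \<Delta>2 C2 \<Longrightarrow> dom \<Delta>1 \<inter> dom \<Delta>2 = {}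
          \<Longrightarrow> config_ty \<Gamma> (\<Delta>1 ++ \<Delta>2) (Par C1 C2)"
| T_Pid: "config_ty (\<Gamma>(a \<mapsto> TActorRef A)) (\<Delta>(a \<mapsto> A)) C \<Longrightarrow> a \<notin> dom \<Delta>
          \<Longrightarrow> config_ty \<Gamma> \<Delta> (Nu a C)"
| T_Actor: "\<Gamma> a = Some (TActorRef A) \<Longrightarrow> comp_ty \<Gamma> A M TUnit \<Longrightarrow> (\<forall>V\<in>set Vs. val_ty \<Gamma> V A)
          \<Longrightarrow> config_ty \<Gamma> [a \<mapsto> A] (Actor a M Vs)"

inductive struct_cong :: "config \<Rightarrow> config \<Rightarrow> bool" (infix "\<equiv>\<^sub>c" 50) where
  SC_refl: "C \<equiv>\<^sub>c C"
| SC_sym: "C \<equiv>\<^sub>c D \<Longrightarrow> D \<equiv>\<^sub>c C"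
| SC_trans: "C \<equiv>\<^sub>c D \<Longrightarrow> D \<equiv>\<^sub>c E \<Longrightarrow> C \<equiv>\<^sub>c E"
| SC_comm: "Par C D \<equiv>\<^sub>c Par D C"
| SC_assoc: "Par C (Par D E) \<equiv>\<^sub>c Par (Par C D) E"
| SC_extr: "a \<notin> fv_config C \<Longrightarrow> Par C (Nu a D) \<equiv>\<^sub>c Nu a (Par C D)"
| SC_ctx_par: "C \<equiv>\<^sub>c D \<Longrightarrow> Par C E \<equiv>\<^sub>c Par D E"
| SC_ctx_nu: "C \<equiv>\<^sub>c D \<Longrightarrow> Nu a C \<equiv>\<^sub>c Nu a D"

end

theory Submission
  imports Defs
begin

lemma ty_agree:
  "val_ty \<Gamma> V A \<Longrightarrow> (\<forall>x\<in>fv_val V. \<Gamma>' x = \<Gamma> x) \<Longrightarrow> val_ty \<Gamma>' V A"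
  "comp_ty \<Gamma> C M B \<Longrightarrow> (\<forall>x\<in>fv_comp M. \<Gamma>' x = \<Gamma> x) \<Longrightarrow> comp_ty \<Gamma>' C M B"
proof (induction arbitrary: \<Gamma>' and \<Gamma>' rule: val_ty_comp_ty.inducts)
  case (T_Id \<Gamma> a A) then have "\<Gamma>' a = Some A" by simp
  then show ?case by (rule val_ty_comp_ty.intros)
next
  case (T_Lam \<Gamma> x A C M B)
  have "comp_ty (\<Gamma>'(x \<mapsto> A)) C M B" by (rule T_Lam.IH) (use T_Lam.prems in auto)
  then show ?case by (rule val_ty_comp_ty.intros)
next
  case (T_Let \<Gamma> C M A x N B)
  have "comp_ty \<Gamma>' C M A" by (rule T_Let.IH(1)) (use T_Let.prems in auto)
  moreover have "comp_ty (\<Gamma>'(x \<mapsto> A)) C N B" by (rule T_Let.IH(2)) (use T_Let.prems in auto)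
  ultimately show ?case by (rule val_ty_comp_ty.intros)
next
  case (T_Unit \<Gamma>) show ?case by (rule val_ty_comp_ty.intros)
next
  case (T_App \<Gamma> V A C B W)
  have "val_ty \<Gamma>' V (TFun A C B)" by (rule T_App.IH(1)) (use T_App.prems in simp)
  moreover have "val_ty \<Gamma>' W A" by (rule T_App.IH(2)) (use T_App.prems in simp)
  ultimately show ?case by (rule val_ty_comp_ty.intros)
next
  case (T_Return \<Gamma> V A C)
  have "val_ty \<Gamma>' V A" by (rule T_Return.IH) (use T_Return.prems in simp)
  then show ?case by (rule val_ty_comp_ty.intros)
next
  case (T_Send \<Gamma> V A W C)
  have "val_ty \<Gamma>' V A" by (rule T_Send.IH(1)) (use T_Send.prems in simp)
  moreover have "val_ty \<Gamma>' W (TActorRef A)" by (rule T_Send.IH(2)) (use T_Send.prems in simp)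
  ultimately show ?case by (rule val_ty_comp_ty.intros)
next
  case (T_Receive \<Gamma> A) show ?case by (rule val_ty_comp_ty.intros)
next
  case (T_Spawn \<Gamma> A M C)
  have "comp_ty \<Gamma>' A M TUnit" by (rule T_Spawn.IH) (use T_Spawn.prems in simp)
  then show ?case by (rule val_ty_comp_ty.intros)
next
  case (T_Self \<Gamma> A) show ?case by (rule val_ty_comp_ty.intros)
qed

lemma cfg_agree:
  "config_ty \<Gamma> \<Delta> C \<Longrightarrow> (\<forall>x\<in>fv_config C. \<Gamma>' x = \<Gamma> x) \<Longrightarrow> config_ty \<Gamma>' \<Delta> C"
proof (induction arbitrary: \<Gamma>' rule: config_ty.induct)
  case (T_Par \<Gamma> \<Delta>1 C1 \<Delta>2 C2)
  have "config_ty \<Gamma>' \<Delta>1 C1" by (rule T_Par.IH(1)) (use T_Par.prems in simp)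
  moreover have "config_ty \<Gamma>' \<Delta>2 C2" by (rule T_Par.IH(2)) (use T_Par.prems in simp)
  ultimately show ?case using T_Par.hyps(3) by (rule config_ty.intros)
next
  case (T_Pid \<Gamma> a A \<Delta> C)
  have "config_ty (\<Gamma>'(a \<mapsto> TActorRef A)) (\<Delta>(a \<mapsto> A)) C"
    by (rule T_Pid.IH) (use T_Pid.prems in auto)
  then show ?case using T_Pid.hyps(2) by (rule config_ty.intros)
next
  case (T_Actor \<Gamma> a A M Vs)
  have "comp_ty \<Gamma>' A M TUnit"
    by (rule ty_agree(2)[OF T_Actor.hyps(2)]) (use T_Actor.prems in simp)
  moreover have "\<forall>V\<in>set Vs. val_ty \<Gamma>' V A"
  proof
    fix V assume v: "V \<in> set Vs"
    show "val_ty \<Gamma>' V A"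
      by (rule ty_agree(1)[where \<Gamma>=\<Gamma>]) (use T_Actor.hyps(3) T_Actor.prems v in auto)
  qed
  moreover have "\<Gamma>' a = Some (TActorRef A)" using T_Actor by simp
  ultimately show ?case by (intro config_ty.intros)
qed

lemma cfg_dom: "config_ty \<Gamma> \<Delta> C \<Longrightarrow> dom \<Delta> \<subseteq> fv_config C"
  by (induction rule: config_ty.induct) auto

lemma upd_other: "a \<notin> fv_config C \<Longrightarrow> \<forall>x\<in>fv_config C. (\<Gamma>(a \<mapsto> T)) x = \<Gamma> x"
  by auto

lemma upd_other': "a \<notin> fv_config C \<Longrightarrow> \<forall>x\<in>fv_config C. \<Gamma> x = (\<Gamma>(a \<mapsto> T)) x"
  by auto

inductive_cases ParE: "config_ty \<Gamma> \<Delta> (Par C D)"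
inductive_cases NuE: "config_ty \<Gamma> \<Delta> (Nu a C)"

lemma extr_lr:
  assumes "a \<notin> fv_config C" "config_ty \<Gamma> \<Delta> (Par C (Nu a D))"
  shows "config_ty \<Gamma> \<Delta> (Nu a (Par C D))"
proof -
  from assms(2) obtain \<Delta>1 \<Delta>2 where d: "\<Delta> = \<Delta>1 ++ \<Delta>2" and c: "config_ty \<Gamma> \<Delta>1 C"
    and n: "config_ty \<Gamma> \<Delta>2 (Nu a D)" and dj: "dom \<Delta>1 \<inter> dom \<Delta>2 = {}"
    by (rule ParE)
  from n obtain A where dd: "config_ty (\<Gamma>(a \<mapsto> TActorRef A)) (\<Delta>2(a \<mapsto> A)) D" and a2: "a \<notin> dom \<Delta>2"
    by (erule NuE)
  have a1: "a \<notin> dom \<Delta>1" using cfg_dom[OF c] assms(1) by auto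
  have c': "config_ty (\<Gamma>(a \<mapsto> TActorRef A)) \<Delta>1 C"
    using cfg_agree[OF c upd_other[OF assms(1)]] .
  have "config_ty (\<Gamma>(a \<mapsto> TActorRef A)) (\<Delta>1 ++ \<Delta>2(a \<mapsto> A)) (Par C D)"
    using config_ty.T_Par[OF c' dd] dj a1 by auto
  moreover have "\<Delta>1 ++ \<Delta>2(a \<mapsto> A) = (\<Delta>1 ++ \<Delta>2)(a \<mapsto> A)" by simp
  ultimately have "config_ty (\<Gamma>(a \<mapsto> TActorRef A)) ((\<Delta>1 ++ \<Delta>2)(a \<mapsto> A)) (Par C D)" by simp
  moreover have "a \<notin> dom (\<Delta>1 ++ \<Delta>2)" using a1 a2 by simp
  ultimately show ?thesis using d by (simp add: config_ty.T_Pid)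
qed

lemma extr_rl:
  assumes "a \<notin> fv_config C" "config_ty \<Gamma> \<Delta> (Nu a (Par C D))"
  shows "config_ty \<Gamma> \<Delta> (Par C (Nu a D))"
proof -
  from assms(2) obtain A where p: "config_ty (\<Gamma>(a \<mapsto> TActorRef A)) (\<Delta>(a \<mapsto> A)) (Par C D)"
    and a0: "a \<notin> dom \<Delta>" by (erule NuE)
  from p obtain \<Delta>1 \<Delta>2 where d: "\<Delta>(a \<mapsto> A) = \<Delta>1 ++ \<Delta>2"
    and c: "config_ty (\<Gamma>(a \<mapsto> TActorRef A)) \<Delta>1 C"
    and dd: "config_ty (\<Gamma>(a \<mapsto> TActorRef A)) \<Delta>2 D" and dj: "dom \<Delta>1 \<inter> dom \<Delta>2 = {}"
    by (rule ParE)
  have a1: "a \<notin> dom \<Delta>1" using cfg_dom[OF c] assms(1) by auto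
  have "(\<Delta>1 ++ \<Delta>2) a = Some A" using d[symmetric] by (metis fun_upd_same)
  then have a2: "\<Delta>2 a = Some A" using a1 by (auto simp: map_add_def domIff split: option.splits)
  have c': "config_ty \<Gamma> \<Delta>1 C"
    using cfg_agree[OF c upd_other'[OF assms(1)]] .
  have e2: "(\<Delta>2(a := None))(a \<mapsto> A) = \<Delta>2" using a2 by auto
  have n: "config_ty \<Gamma> (\<Delta>2(a := None)) (Nu a D)"
    by (rule config_ty.T_Pid[of \<Gamma> a A]) (use dd e2 in auto)
  have "config_ty \<Gamma> (\<Delta>1 ++ \<Delta>2(a := None)) (Par C (Nu a D))"
    by (rule config_ty.T_Par[OF c' n]) (use dj in auto)
  moreover have "\<Delta>1 ++ \<Delta>2(a := None) = \<Delta>"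
  proof
    fix x show "(\<Delta>1 ++ \<Delta>2(a := None)) x = \<Delta> x"
    proof (cases "x = a")
      case True then show ?thesis using a0 a1 by (auto simp: map_add_def domIff split: option.splits)
    next
      case False
      have "\<Delta> x = (\<Delta>(a \<mapsto> A)) x" using False by simp
      also have "\<dots> = (\<Delta>1 ++ \<Delta>2) x" using d by simp
      finally show ?thesis using False by (simp add: map_add_def)
    qed
  qed
  ultimately show ?thesis by simp
qed

lemma sc_iff: "C \<equiv>\<^sub>c D \<Longrightarrow> (\<forall>\<Gamma> \<Delta>. config_ty \<Gamma> \<Delta> C = config_ty \<Gamma> \<Delta> D)"
proof (induction rule: struct_cong.induct)
  case (SC_comm C D)
  have "config_ty \<Gamma> \<Delta> (Par D C)" if "config_ty \<Gamma> \<Delta> (Par C D)" for \<Gamma> \<Delta> C D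
  proof -
    from that obtain \<Delta>1 \<Delta>2 where "\<Delta> = \<Delta>1 ++ \<Delta>2" "config_ty \<Gamma> \<Delta>1 C"
      "config_ty \<Gamma> \<Delta>2 D" "dom \<Delta>1 \<inter> dom \<Delta>2 = {}" by (rule ParE)
    then show ?thesis using config_ty.T_Par[of \<Gamma> \<Delta>2 D \<Delta>1 C]
      by (metis inf_commute map_add_comm)
  qed
  then show ?case by blast
next
  case (SC_assoc C D E)
  show ?case
  proof (intro allI iffI)
    fix \<Gamma> \<Delta> assume "config_ty \<Gamma> \<Delta> (Par C (Par D E))"
    then obtain \<Delta>1 \<Delta>23 where h1: "\<Delta> = \<Delta>1 ++ \<Delta>23" "config_ty \<Gamma> \<Delta>1 C"
      "config_ty \<Gamma> \<Delta>23 (Par D E)" "dom \<Delta>1 \<inter> dom \<Delta>23 = {}" by (rule ParE)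
    from h1(3) obtain \<Delta>2 \<Delta>3 where h2: "\<Delta>23 = \<Delta>2 ++ \<Delta>3"
      "config_ty \<Gamma> \<Delta>2 D" "config_ty \<Gamma> \<Delta>3 E" "dom \<Delta>2 \<inter> dom \<Delta>3 = {}" by (rule ParE)
    have p: "config_ty \<Gamma> (\<Delta>1 ++ \<Delta>2) (Par C D)"
      by (rule config_ty.T_Par[OF h1(2) h2(2)]) (use h1(4) h2(1) in auto)
    have "config_ty \<Gamma> ((\<Delta>1 ++ \<Delta>2) ++ \<Delta>3) (Par (Par C D) E)"
      by (rule config_ty.T_Par[OF p h2(3)]) (use h1(4) h2(1,4) in auto)
    then show "config_ty \<Gamma> \<Delta> (Par (Par C D) E)" using h1(1) h2(1) by (simp add: map_add_assoc)
  next
    fix \<Gamma> \<Delta> assume "config_ty \<Gamma> \<Delta> (Par (Par C D) E)"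
    then obtain \<Delta>12 \<Delta>3 where h1: "\<Delta> = \<Delta>12 ++ \<Delta>3" "config_ty \<Gamma> \<Delta>12 (Par C D)"
      "config_ty \<Gamma> \<Delta>3 E" "dom \<Delta>12 \<inter> dom \<Delta>3 = {}" by (rule ParE)
    from h1(2) obtain \<Delta>1 \<Delta>2 where h2: "\<Delta>12 = \<Delta>1 ++ \<Delta>2"
      "config_ty \<Gamma> \<Delta>1 C" "config_ty \<Gamma> \<Delta>2 D" "dom \<Delta>1 \<inter> dom \<Delta>2 = {}" by (rule ParE)
    have p: "config_ty \<Gamma> (\<Delta>2 ++ \<Delta>3) (Par D E)"
      by (rule config_ty.T_Par[OF h2(3) h1(3)]) (use h1(4) h2(1) in auto)
    have "config_ty \<Gamma> (\<Delta>1 ++ (\<Delta>2 ++ \<Delta>3)) (Par C (Par D E))"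
      by (rule config_ty.T_Par[OF h2(2) p]) (use h1(4) h2(1,4) in auto)
    then show "config_ty \<Gamma> \<Delta> (Par C (Par D E))" using h1(1) h2(1) by (simp add: map_add_assoc)
  qed
next
  case (SC_extr a C D)
  then show ?case using extr_lr extr_rl by blast
next
  case (SC_ctx_par C D E)
  have "config_ty \<Gamma> \<Delta> (Par Y E)" if "config_ty \<Gamma> \<Delta> (Par X E)"
    and "\<forall>\<Gamma> \<Delta>. config_ty \<Gamma> \<Delta> X = config_ty \<Gamma> \<Delta> Y" for \<Gamma> \<Delta> X Y
  proof -
    from that(1) obtain \<Delta>1 \<Delta>2 where h: "\<Delta> = \<Delta>1 ++ \<Delta>2" "config_ty \<Gamma> \<Delta>1 X"
      "config_ty \<Gamma> \<Delta>2 E" "dom \<Delta>1 \<inter> dom \<Delta>2 = {}" by (rule ParE)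
    from h(2) that(2) have "config_ty \<Gamma> \<Delta>1 Y" by blast
    from config_ty.T_Par[OF this h(3) h(4)] h(1) show ?thesis by simp
  qed
  then show ?case using SC_ctx_par.IH by blast
next
  case (SC_ctx_nu C D a)
  have "config_ty \<Gamma> \<Delta> (Nu a Y)" if "config_ty \<Gamma> \<Delta> (Nu a X)"
    and "\<forall>\<Gamma> \<Delta>. config_ty \<Gamma> \<Delta> X = config_ty \<Gamma> \<Delta> Y" for \<Gamma> \<Delta> X Y
  proof -
    from that(1) obtain A where h: "config_ty (\<Gamma>(a \<mapsto> TActorRef A)) (\<Delta>(a \<mapsto> A)) X" "a \<notin> dom \<Delta>"
      by (rule NuE)
    from h(1) that(2) have "config_ty (\<Gamma>(a \<mapsto> TActorRef A)) (\<Delta>(a \<mapsto> A)) Y" by blast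
    from config_ty.T_Pid[OF this h(2)] show ?thesis .
  qed
  then show ?case using SC_ctx_nu.IH by blast
next
  case (SC_sym C D) then show ?case by blast
next
  case (SC_trans C D E) then show ?case by blast
next
  case (SC_refl C) then show ?case by blast
qed

theorem lemma11:
  assumes "config_ty \<Gamma> \<Delta> C"
    and "C \<equiv>\<^sub>c D"
  shows "config_ty \<Gamma> \<Delta> D"
  using sc_iff[OF assms(2)] assms(1) by blast

end
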